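(* Let $\boldsymbol z\in\{0,1\}^n$ and $\boldsymbol y\in\mathbb R^n$. Let $\mathcal Z_1=\{i:z_i=1\}$, $n_1=|\mathcal Z_1|$, and write $\mathcal Z_1=\{j_1,\dots,j_{n_1}\}$ with $\mathrm{rank}_{j_1}(\boldsymbol y)<\dots<\mathrm{rank}_{j_{n_1}}(\boldsymbol y)$. For an integer $0\le L\le n_1$, $c\in\mathbb R$ and $\kappa>0$, let $\mathcal H_L=\{\boldsymbol\delta\in\mathbb R^n:\sum_{i\in\mathcal Z_1}\mathbf 1(\delta_i>c)\le L\}$, $\mathcal A_L=\{j_{n_1-L+1},\dots,j_{n_1}\}$ if $L\ge1$ and $\mathcal A_0=\emptyset$, $\gamma=\max\{y_i:z_i=1\}-\min\{y_i:z_i=0\}+\kappa$, and $\boldsymbol\eta_L\in\mathbb R^n$ with $\eta_{L,i}=\gamma$ for $i\in\mathcal A_L$ and $\eta_{L,i}=c$ otherwise. Then for every $\boldsymbol\delta\in\mathcal H_L$: (i) for each $1\le k\le n_1$, the $k$-th smallest element of $\{\mathrm{rank}_i(\boldsymbol y-\boldsymbol z\circ\boldsymbol\delta):z_i=1\}$ is at least the $k$-th smallest element of $\{\mathrm{rank}_i(\boldsymbol y-\boldsymbol z\circ\boldsymbol\eta_L):z_i=1\}$; (ii) for each $1\le k\le n-n_1$, the $k$-th smallest element of $\{\mathrm{rank}_i(\boldsymbol y-\boldsymbol z\circ\boldsymbol\delta):z_i=0\}$ is at most the $k$-th smallest element of $\{\mathrm{rank}_i(\boldsymbol y-\boldsymbol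 z\circ\boldsymbol\eta_L):z_i=0\}$.
   Context: For $1\le i,j\le n$ and $y,y'\in\mathbb R$, $\psi_{i,j}(y,y')=\mathbf 1\{y>y'\}+\mathbf 1\{y=y'\}\mathbf 1\{i\ge j\}$; for $\boldsymbol y\in\mathbb R^n$, $\mathrm{rank}_i(\boldsymbol y)=\sum_{j=1}^n\psi_{i,j}(y_i,y_j)$ (a permutation of $\{1,\dots,n\}$). $\circ$ denotes the entrywise product. *)

theory Defs
  imports Complex_Main
begin

(* Indices range over {1..n}; vectors in R^n are functions nat => real, only
   their values on {1..n} matter. *)

definition psi :: "nat \<Rightarrow> nat \<Rightarrow> real \<Rightarrow> real \<Rightarrow> nat" where
  "psi i j u v = (if u > v then 1 else 0) + (if u = v \<and> i \<ge> j then 1 else 0)"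

definition rank :: "nat \<Rightarrow> (nat \<Rightarrow> real) \<Rightarrow> nat \<Rightarrow> nat" where
  "rank n y i = (\<Sum>j\<in>{1..n}. psi i j (y i) (y j))"

definition kth_rank :: "nat \<Rightarrow> (nat \<Rightarrow> real) \<Rightarrow> nat set \<Rightarrow> nat \<Rightarrow> nat" where
  "kth_rank n w S k = sort (map (rank n w) (sorted_list_of_set S)) ! (k - 1)"

definition Zset :: "nat \<Rightarrow> (nat \<Rightarrow> real) \<Rightarrow> real \<Rightarrow> nat set" where
  "Zset n z b = {i\<in>{1..n}. z i = b}"

definition js :: "nat \<Rightarrow> (nat \<Rightarrow> real) \<Rightarrow> (nat \<Rightarrow> real) \<Rightarrow> nat list" where
  "js n z y = sort_key (rank n y) (sorted_list_of_set (Zset n z 1))"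

definition A_set :: "nat \<Rightarrow> (nat \<Rightarrow> real) \<Rightarrow> (nat \<Rightarrow> real) \<Rightarrow> nat \<Rightarrow> nat set" where
  "A_set n z y L = set (drop (card (Zset n z 1) - L) (js n z y))"

definition gamma :: "nat \<Rightarrow> (nat \<Rightarrow> real) \<Rightarrow> (nat \<Rightarrow> real) \<Rightarrow> real \<Rightarrow> real" where
  "gamma n z y \<kappa> = Max (y ` Zset n z 1) - Min (y ` Zset n z 0) + \<kappa>"

definition eta :: "nat \<Rightarrow> (nat \<Rightarrow> real) \<Rightarrow> (nat \<Rightarrow> real) \<Rightarrow> nat \<Rightarrow> real \<Rightarrow> real \<Rightarrow> nat \<Rightarrow> real" where
  "eta n z y L c \<kappa> i = (if i \<in> A_set n z y L then gamma n z y \<kappa> else c)"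

definition H_set :: "nat \<Rightarrow> (nat \<Rightarrow> real) \<Rightarrow> nat \<Rightarrow> real \<Rightarrow> (nat \<Rightarrow> real) set" where
  "H_set n z L c = {\<delta>. card {i \<in> Zset n z 1. \<delta> i > c} \<le> L}"

end

theory Submission imports Defs begin

definition lexle :: "(nat \<Rightarrow> real) \<Rightarrow> nat \<Rightarrow> nat \<Rightarrow> bool" where
  "lexle w j i \<longleftrightarrow> w j < w i \<or> (w j = w i \<and> j \<le> i)"

lemma rank_card: "rank n w i = card {j\<in>{1..n}. lexle w j i}"
proof -
  have "rank n w i = (\<Sum>j\<in>{1..n}. if lexle w j i then 1 else 0)"
    unfolding rank_def psi_def lexle_def by (intro sum.cong) auto
  also have "\<dots> = card {j\<in>{1..n}. lexle w j i}"
    by (simp add: sum.If_cases Int_def)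
  finally show ?thesis .
qed

lemma rank_mono_lt:
  assumes "lexle w j i" "j \<noteq> i" "i \<in> {1..n}"
  shows "rank n w j < rank n w i"
proof -
  have "{k\<in>{1..n}. lexle w k j} \<subset> {k\<in>{1..n}. lexle w k i}"
  proof
    show "{k\<in>{1..n}. lexle w k j} \<subseteq> {k\<in>{1..n}. lexle w k i}"
      using assms(1) unfolding lexle_def by auto
    have "i \<notin> {k\<in>{1..n}. lexle w k j}" using assms(1,2) unfolding lexle_def by auto
    moreover have "i \<in> {k\<in>{1..n}. lexle w k i}" using assms(3) unfolding lexle_def by auto
    ultimately show "{k\<in>{1..n}. lexle w k j} \<noteq> {k\<in>{1..n}. lexle w k i}" by blast
  qed
  then show ?thesis unfolding rank_card by (intro psubset_card_mono) auto
qed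

lemma lexle_total: "lexle w j i \<or> lexle w i j"
  unfolding lexle_def by auto

lemma rank_inj: "inj_on (rank n w) {1..n}"
proof (rule inj_onI)
  fix i j assume ij: "i \<in> {1..n}" "j \<in> {1..n}" "rank n w i = rank n w j"
  show "i = j"
  proof (rule ccontr)
    assume "i \<noteq> j"
    then show False using lexle_total[of w i j] rank_mono_lt[of w i j n] rank_mono_lt[of w j i n] ij
      by auto
  qed
qed

lemma rank_range: "i \<in> {1..n} \<Longrightarrow> rank n w i \<in> {1..n}"
proof -
  assume i: "i \<in> {1..n}"
  have "i \<in> {j\<in>{1..n}. lexle w j i}" using i unfolding lexle_def by auto
  hence "card {i} \<le> card {j\<in>{1..n}. lexle w j i}"
    by (intro card_mono) auto
  moreover have "card {j\<in>{1..n}. lexle w j i} \<le> card {1..n}"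
    by (intro card_mono) auto
  ultimately show ?thesis unfolding rank_card by auto
qed

lemma rank_bij: "bij_betw (rank n w) {1..n} {1..n}"
proof -
  have "rank n w ` {1..n} \<subseteq> {1..n}" using rank_range by auto
  moreover have "card (rank n w ` {1..n}) = card {1..n::nat}"
    using card_image[OF rank_inj] by simp
  ultimately have "rank n w ` {1..n} = {1..n}"
    by (intro card_subset_eq) auto
  thus ?thesis using rank_inj unfolding bij_betw_def by auto
qed

lemma count_all: "card {i\<in>{1..n}. rank n w i < r} = card {k\<in>{1..n::nat}. k < r}"
proof -
  have im: "rank n w ` {1..n} = {1..n}" using rank_bij[of n w] by (simp add: bij_betw_def)
  have "inj_on (rank n w) {i\<in>{1..n}. rank n w i < r}"
    by (rule inj_on_subset[OF rank_inj]) blast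
  moreover have "rank n w ` {i\<in>{1..n}. rank n w i < r} = {k\<in>{1..n::nat}. k < r}"
  proof
    show "rank n w ` {i\<in>{1..n}. rank n w i < r} \<subseteq> {k\<in>{1..n::nat}. k < r}"
      using im by blast
    show "{k\<in>{1..n::nat}. k < r} \<subseteq> rank n w ` {i\<in>{1..n}. rank n w i < r}"
    proof
      fix k assume k: "k \<in> {k\<in>{1..n::nat}. k < r}"
      then obtain i where "i \<in> {1..n}" "k = rank n w i" using im by (metis (no_types, lifting) imageE mem_Collect_eq)
      thus "k \<in> rank n w ` {i\<in>{1..n}. rank n w i < r}" using k by blast
    qed
  qed
  ultimately have "bij_betw (rank n w) {i\<in>{1..n}. rank n w i < r} {k\<in>{1..n::nat}. k < r}"
    unfolding bij_betw_def by blast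
  thus ?thesis by (rule bij_betw_same_card)
qed

lemma sorted_nth_lt:
  "sorted s \<Longrightarrow> i < length s \<Longrightarrow> (s ! i < (r::nat)) = (i < length (filter (\<lambda>x. x < r) s))"
proof (induction s arbitrary: i)
  case Nil then show ?case by simp
next
  case (Cons a s)
  show ?case
  proof (cases "a < r")
    case True
    then show ?thesis using Cons by (cases i) auto
  next
    case False
    then have "filter (\<lambda>x. x < r) (a # s) = []" using Cons.prems(1) by (auto simp: filter_empty_conv)
    moreover have "(a#s) ! i \<ge> a" using Cons.prems
      by (cases i) (auto simp: nth_mem)
    ultimately show ?thesis using False by auto
  qed
qed

lemma count_filter: "finite S \<Longrightarrow>
   length (filter (\<lambda>x. x < r) (map f (sorted_list_of_set S))) = card {i\<in>S. f i < r}"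
proof -
  assume S: "finite S"
  have "length (filter (\<lambda>x. x < r) (map f (sorted_list_of_set S)))
      = length (filter (\<lambda>x. f x < r) (sorted_list_of_set S))"
    by (simp add: filter_map comp_def)
  also have "\<dots> = card ({x. f x < r} \<inter> set (sorted_list_of_set S))"
    by (rule distinct_length_filter) simp
  also have "{x. f x < r} \<inter> set (sorted_list_of_set S) = {i\<in>S. f i < r}"
    using S by auto
  finally show ?thesis .
qed

lemma kth_lt:
  assumes "finite S" "k \<in> {1..card S}"
  shows "(kth_rank n w S k < r) = (k \<le> card {i\<in>S. rank n w i < r})"
proof -
  let ?xs = "map (rank n w) (sorted_list_of_set S)"
  have "(sort ?xs ! (k-1) < r) = (k - 1 < length (filter (\<lambda>x. x < r) (sort ?xs)))"
  proof (rule sorted_nth_lt)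
    show "sorted (sort ?xs)" by (rule sorted_sort)
    have "length (sort ?xs) = card S" by simp
    moreover have "1 \<le> k" "k \<le> card S" using assms(2) by auto
    ultimately show "k - 1 < length (sort ?xs)" by arith
  qed
  also have "length (filter (\<lambda>x. x < r) (sort ?xs)) = length (filter (\<lambda>x. x < r) ?xs)"
    by (simp add: filter_sort)
  also have "\<dots> = card {i\<in>S. rank n w i < r}" using count_filter[OF assms(1)] .
  finally have "(kth_rank n w S k < r) = (k - 1 < card {i\<in>S. rank n w i < r})"
    unfolding kth_rank_def .
  moreover have "k \<ge> 1" using assms(2) by simp
  ultimately show ?thesis by (cases k) auto
qed

lemma kth_cmp:
  assumes "finite S" "k \<in> {1..card S}"
    and "\<And>r. card {i\<in>S. rank n f i < r} \<le> card {i\<in>S. rank n g i < r}"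
  shows "kth_rank n g S k \<le> kth_rank n f S k"
proof -
  define a where "a = kth_rank n f S k"
  have "kth_rank n f S k < Suc a" unfolding a_def by (rule lessI)
  hence "k \<le> card {i\<in>S. rank n f i < Suc a}" by (rule kth_lt[OF assms(1,2), THEN iffD1])
  also have "\<dots> \<le> card {i\<in>S. rank n g i < Suc a}" by (rule assms(3))
  finally have "kth_rank n g S k < Suc a" by (rule kth_lt[OF assms(1,2), THEN iffD2])
  thus ?thesis unfolding a_def by (rule less_Suc_eq_le[THEN iffD1])
qed


lemma Zset_fin: "finite (Zset n z b)" unfolding Zset_def by auto

lemma split_card:
  assumes z01: "\<forall>i\<in>{1..n}. z i \<in> {0, 1}"
  shows "card {j\<in>{1..n}. P j} = card {j\<in>Zset n z 0. P j} + card {j\<in>Zset n z 1. P j}"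
proof -
  have "{j\<in>{1..n}. P j} = {j\<in>Zset n z 0. P j} \<union> {j\<in>Zset n z 1. P j}"
    using z01 unfolding Zset_def by auto
  moreover have "{j\<in>Zset n z 0. P j} \<inter> {j\<in>Zset n z 1. P j} = {}"
    unfolding Zset_def by auto
  ultimately show ?thesis
    by (simp add: card_Un_disjoint Zset_fin)
qed

lemma js_facts:
  "set (js n z y) = Zset n z 1" "distinct (js n z y)" "length (js n z y) = card (Zset n z 1)"
  "sorted (map (rank n y) (js n z y))"
  unfolding js_def by (simp_all add: Zset_fin)

lemma A_sub: "A_set n z y L \<subseteq> Zset n z 1"
  unfolding A_set_def using js_facts(1) by (metis set_drop_subset)

lemma A_card: "L \<le> card (Zset n z 1) \<Longrightarrow> card (A_set n z y L) = L"
  unfolding A_set_def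
  by (simp add: distinct_card js_facts(2,3))

lemma comparable:
  fixes u n L :: nat and c :: real and z y :: "nat \<Rightarrow> real"
  defines "D \<equiv> {j\<in>Zset n z 1. y j - c < y u \<or> (y j - c = y u \<and> j \<le> u)}"
  shows "D \<subseteq> Zset n z 1 - A_set n z y L \<or> Zset n z 1 - A_set n z y L \<subseteq> D"
proof (rule ccontr)
  assume "\<not> ?thesis"
  then obtain x v where x: "x \<in> D" "x \<in> A_set n z y L"
    and v: "v \<in> Zset n z 1" "v \<notin> A_set n z y L" "v \<notin> D"
    unfolding D_def by blast
  define m where "m = card (Zset n z 1) - L"
  have xd: "x \<in> set (drop m (js n z y))" using x(2) unfolding A_set_def m_def .
  have "v \<in> set (take m (js n z y)) \<union> set (drop m (js n z y))" using v(1) js_facts(1)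
    by (metis append_take_drop_id set_append)
  hence vt: "v \<in> set (take m (js n z y))" using v(2) unfolding A_set_def m_def by blast
  have "sorted (map (rank n y) (take m (js n z y)) @ map (rank n y) (drop m (js n z y)))"
    using js_facts(4)[of n y z] by (metis append_take_drop_id map_append)
  hence le: "rank n y v \<le> rank n y x" using vt xd unfolding sorted_append by auto
  have ne: "v \<noteq> x" using x(1) v(3) by auto
  have vr: "v \<in> {1..n}" using v(1) unfolding Zset_def by auto
  have "lexle y v x"
  proof (rule ccontr)
    assume "\<not> lexle y v x"
    hence "lexle y x v" using lexle_total by blast
    hence "rank n y x < rank n y v" using rank_mono_lt[of y x v n] ne vr by auto
    thus False using le by simp
  qed
  hence "v \<in> D" using x(1) v(1) unfolding D_def lexle_def by auto
  thus False using v(3) by simp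
qed

lemma ctrl:
  fixes n L :: nat and z y \<delta> :: "nat \<Rightarrow> real" and c \<kappa> :: real
  assumes z01: "\<forall>i\<in>{1..n}. z i \<in> {0, 1}"
    and L: "L \<le> card (Zset n z 1)"
    and kap: "\<kappa> > 0"
    and F: "card {i \<in> Zset n z 1. \<delta> i > c} \<le> L"
    and u: "u \<in> Zset n z 0"
  shows "rank n (\<lambda>i. y i - z i * \<delta> i) u \<le> rank n (\<lambda>i. y i - z i * eta n z y L c \<kappa> i) u"
proof -
  define wd where "wd = (\<lambda>i. y i - z i * \<delta> i)"
  define we where "we = (\<lambda>i. y i - z i * eta n z y L c \<kappa> i)"
  define Z1 where "Z1 = Zset n z 1"
  define A where "A = A_set n z y L"
  define F where "F = {i \<in> Z1. \<delta> i > c}"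
  define D where "D = {j\<in>Z1. y j - c < y u \<or> (y j - c = y u \<and> j \<le> u)}"
  have fin: "finite Z1" unfolding Z1_def by (rule Zset_fin)
  have zu: "z u = 0" using u unfolding Zset_def by auto
  have z1: "\<And>j. j \<in> Z1 \<Longrightarrow> z j = 1" unfolding Z1_def Zset_def by auto
  have wdu: "wd u = y u" "we u = y u" unfolding wd_def we_def using zu by auto
  have eq0: "\<And>j. j \<in> Zset n z 0 \<Longrightarrow> wd j = we j" unfolding Zset_def wd_def we_def by auto
  have Z0eq: "{j\<in>Zset n z 0. lexle wd j u} = {j\<in>Zset n z 0. lexle we j u}"
    using eq0 wdu unfolding lexle_def by auto
  have "{j\<in>Z1. lexle wd j u} \<subseteq> F \<union> D"
  proof
    fix j assume j: "j \<in> {j\<in>Z1. lexle wd j u}"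
    show "j \<in> F \<union> D"
    proof (cases "\<delta> j > c")
      case True thus ?thesis using j unfolding F_def by auto
    next
      case False
      hence "wd j \<ge> y j - c" unfolding wd_def using z1 j by auto
      thus ?thesis using j wdu unfolding D_def lexle_def by auto
    qed
  qed
  hence T1: "card {j\<in>Z1. lexle wd j u} \<le> card (F \<union> D)"
    by (intro card_mono) (auto simp: F_def D_def fin)
  have gam: "\<And>j. j \<in> Z1 \<Longrightarrow> y j - gamma n z y \<kappa> < y u"
  proof -
    fix j assume j: "j \<in> Z1"
    have "y j \<le> Max (y ` Zset n z 1)" using j fin unfolding Z1_def by auto
    moreover have "Min (y ` Zset n z 0) \<le> y u" using u Zset_fin by auto
    ultimately show "y j - gamma n z y \<kappa> < y u" unfolding gamma_def using kap by linarith
  qed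
  have AZ: "A \<subseteq> Z1" unfolding A_def Z1_def by (rule A_sub)
  have "A \<union> D \<subseteq> {j\<in>Z1. lexle we j u}"
  proof
    fix j assume j: "j \<in> A \<union> D"
    show "j \<in> {j\<in>Z1. lexle we j u}"
    proof (cases "j \<in> A")
      case True
      hence "we j = y j - gamma n z y \<kappa>" "j \<in> Z1"
        unfolding we_def eta_def using z1 AZ A_def by auto
      thus ?thesis using gam wdu unfolding lexle_def by auto
    next
      case False
      hence "j \<in> D" "we j = y j - c" "j \<in> Z1"
        using j z1 unfolding we_def eta_def A_def D_def by auto
      thus ?thesis using wdu unfolding lexle_def D_def by auto
    qed
  qed
  hence T2: "card (A \<union> D) \<le> card {j\<in>Z1. lexle we j u}"
    by (intro card_mono) (auto simp: fin)
  have cA: "card A = L" unfolding A_def using A_card[OF L] .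
  have cF: "card F \<le> L" using F unfolding F_def Z1_def .
  have DZ: "D \<subseteq> Z1" "F \<subseteq> Z1" unfolding D_def F_def by auto
  have "card (F \<union> D) \<le> card (A \<union> D)"
  proof (cases "D \<subseteq> Z1 - A")
    case True
    hence "card (A \<union> D) = card A + card D"
      using fin DZ AZ by (intro card_Un_disjoint) (auto intro: finite_subset)
    moreover have "card (F \<union> D) \<le> card F + card D" by (rule card_Un_le)
    ultimately show ?thesis using cA cF by linarith
  next
    case False
    hence "Z1 - A \<subseteq> D" using comparable[where u=u and n=n and L=L and c=c and z=z and y=y] unfolding D_def Z1_def A_def by blast
    hence "A \<union> D = Z1" using AZ DZ by blast
    moreover have "card (F \<union> D) \<le> card Z1" using DZ fin by (intro card_mono) auto
    ultimately show ?thesis by simp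
  qed
  have "rank n wd u = card {j\<in>Zset n z 0. lexle wd j u} + card {j\<in>Z1. lexle wd j u}"
    unfolding rank_card Z1_def by (rule split_card[OF z01])
  also have "\<dots> \<le> card {j\<in>Zset n z 0. lexle we j u} + card {j\<in>Z1. lexle we j u}"
    using Z0eq T1 T2 \<open>card (F \<union> D) \<le> card (A \<union> D)\<close> by simp
  also have "\<dots> = rank n we u"
    unfolding rank_card Z1_def by (rule split_card[OF z01, symmetric])
  finally show ?thesis unfolding wd_def we_def .
qed

theorem lemma6:
  fixes n L :: nat and z y \<delta> :: "nat \<Rightarrow> real" and c \<kappa> :: real
  assumes "\<forall>i\<in>{1..n}. z i \<in> {0, 1}"
    and "L \<le> card (Zset n z 1)"
    and "\<kappa> > 0"
    and "\<delta> \<in> H_set n z L c"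
  shows "(\<forall>k\<in>{1..card (Zset n z 1)}.
            kth_rank n (\<lambda>i. y i - z i * \<delta> i) (Zset n z 1) k
              \<ge> kth_rank n (\<lambda>i. y i - z i * eta n z y L c \<kappa> i) (Zset n z 1) k)
       \<and> (\<forall>k\<in>{1..n - card (Zset n z 1)}.
            kth_rank n (\<lambda>i. y i - z i * \<delta> i) (Zset n z 0) k
              \<le> kth_rank n (\<lambda>i. y i - z i * eta n z y L c \<kappa> i) (Zset n z 0) k)"
proof -
  define wd where "wd = (\<lambda>i. y i - z i * \<delta> i)"
  define we where "we = (\<lambda>i. y i - z i * eta n z y L c \<kappa> i)"
  have F: "card {i \<in> Zset n z 1. \<delta> i > c} \<le> L" using assms(4) unfolding H_set_def by simp
  have pw: "\<And>u. u \<in> Zset n z 0 \<Longrightarrow> rank n wd u \<le> rank n we u"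
    unfolding wd_def we_def using ctrl[OF assms(1,2,3) F] by blast
  have C0: "\<And>r. card {i\<in>Zset n z 0. rank n we i < r} \<le> card {i\<in>Zset n z 0. rank n wd i < r}"
    by (intro card_mono) (auto simp: Zset_fin dest: pw)
  have "{j\<in>{1..n}. True} = {1..n}" by auto
  hence cardZ: "n = card (Zset n z 0) + card (Zset n z 1)"
    using split_card[OF assms(1), of "\<lambda>_. True"] by simp
  hence cZ0: "card (Zset n z 0) = n - card (Zset n z 1)" by simp
  have C1: "card {i\<in>Zset n z 1. rank n wd i < r} \<le> card {i\<in>Zset n z 1. rank n we i < r}" for r
  proof -
    have a: "card {i\<in>{1..n}. rank n wd i < r} = card {i\<in>Zset n z 0. rank n wd i < r} + card {i\<in>Zset n z 1. rank n wd i < r}"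
      by (rule split_card[OF assms(1)])
    have b: "card {i\<in>{1..n}. rank n we i < r} = card {i\<in>Zset n z 0. rank n we i < r} + card {i\<in>Zset n z 1. rank n we i < r}"
      by (rule split_card[OF assms(1)])
    have "card {i\<in>{1..n}. rank n wd i < r} = card {i\<in>{1..n}. rank n we i < r}"
      using count_all[of n wd r] count_all[of n we r] by simp
    thus ?thesis using a b C0[of r] by linarith
  qed
  have r1: "\<forall>k\<in>{1..card (Zset n z 1)}. kth_rank n wd (Zset n z 1) k \<ge> kth_rank n we (Zset n z 1) k"
      using kth_cmp[OF Zset_fin _ C1] by blast
  have r2: "\<forall>k\<in>{1..n - card (Zset n z 1)}. kth_rank n wd (Zset n z 0) k \<le> kth_rank n we (Zset n z 0) k"
      using kth_cmp[OF Zset_fin _ C0] cZ0 by metis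
  show ?thesis using r1 r2 unfolding wd_def we_def by blast
qed

end
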